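(* Let $k\ge1$, $G=(V,E)$ an inductively $k$-independent graph with $k$-independence ordering $v_1,\dots,v_n$, $f:2^V\to\mathbb{R}_{\ge0}$ monotone submodular with $f(\emptyset)=0$, and $\beta>0$. Run algorithm PREEMPTIVE-GREEDY (described in the context), let $S_{\mathrm{out}}$ be its output and $U$ the set of all vertices ever contained in $S$ during the run. Then for every independent set $T$ of $G$, \[ f(U\cup T)-f(U)\le k(1+\beta)(1+\beta^{-1})\,f(S_{\mathrm{out}}). \]
   Context: $N(v)$ is the neighbourhood of $v$ (excluding $v$); $G$ is inductively $k$-independent with $k$-independence ordering $v_1,\dots,v_n$ if for every $i$, $G[N(v_i)\cap\{v_i,\dots,v_n\}]$ has no independent set of size more than $k$. Order $V$ by $v_1<\dots<v_n$. For $S\subseteq V$: $f_S(v)=f(S\cup\{v\})-f(S)$, and $\nu_f(S,u)=f_{S'}(u)$ where $S'=\{s\in S:s<u\}$. Algorithm PREEMPTIVE-GREEDY (parameter $\beta>0$): start with $S=\emptyset$; for $i=1,\dots,n$: let $C_i=N(v_i)\cap S$; if $f_S(v_i)\ge(1+\beta)\sum_{u\in C_i}\nu_f(S,u)$, replace $S$ by $(S\setminus C_i)\cup\{v_i\}$. Return the final $S$ as $S_{\mathrm{out}}$. *)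

theory Defs
  imports Main "HOL-Analysis.Analysis"
begin

text \<open>Simple graphs on a finite vertex set: an edge relation E, symmetric,
irreflexive, with all edges inside the vertex set. The vertex ordering
v_1,...,v_n is a distinct list vs with set vs = V.\<close>

definition simple_graph :: "'a set \<Rightarrow> ('a \<Rightarrow> 'a \<Rightarrow> bool) \<Rightarrow> bool" where
  "simple_graph V E \<longleftrightarrow> (\<forall>u w. E u w \<longrightarrow> u \<in> V \<and> w \<in> V \<and> E w u \<and> u \<noteq> w)"

definition nbhd :: "('a \<Rightarrow> 'a \<Rightarrow> bool) \<Rightarrow> 'a \<Rightarrow> 'a set" where
  "nbhd E v = {u. E v u}"

definition indep_set :: "('a \<Rightarrow> 'a \<Rightarrow> bool) \<Rightarrow> 'a set \<Rightarrow> bool" where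
  "indep_set E A \<longleftrightarrow> (\<forall>u\<in>A. \<forall>w\<in>A. \<not> E u w)"

definition k_indep_ordering :: "('a \<Rightarrow> 'a \<Rightarrow> bool) \<Rightarrow> nat \<Rightarrow> 'a list \<Rightarrow> bool" where
  "k_indep_ordering E k vs \<longleftrightarrow>
     (\<forall>i < length vs. \<forall>A. A \<subseteq> nbhd E (vs ! i) \<inter> set (drop i vs) \<longrightarrow> indep_set E A \<longrightarrow> card A \<le> k)"

definition monotone_set_fun :: "'a set \<Rightarrow> ('a set \<Rightarrow> real) \<Rightarrow> bool" where
  "monotone_set_fun V f \<longleftrightarrow> (\<forall>A B. A \<subseteq> B \<longrightarrow> B \<subseteq> V \<longrightarrow> f A \<le> f B)"

definition submodular :: "'a set \<Rightarrow> ('a set \<Rightarrow> real) \<Rightarrow> bool" where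
  "submodular V f \<longleftrightarrow> (\<forall>A B. A \<subseteq> V \<longrightarrow> B \<subseteq> V \<longrightarrow> f (A \<union> B) + f (A \<inter> B) \<le> f A + f B)"

definition ord_less :: "'a list \<Rightarrow> 'a \<Rightarrow> 'a \<Rightarrow> bool" where
  "ord_less vs a b \<longleftrightarrow> (\<exists>i j. i < j \<and> j < length vs \<and> vs ! i = a \<and> vs ! j = b)"

definition marg :: "('a set \<Rightarrow> real) \<Rightarrow> 'a set \<Rightarrow> 'a \<Rightarrow> real" where
  "marg f S v = f (S \<union> {v}) - f S"

definition nu :: "'a list \<Rightarrow> ('a set \<Rightarrow> real) \<Rightarrow> 'a set \<Rightarrow> 'a \<Rightarrow> real" where
  "nu vs f S u = marg f {s \<in> S. ord_less vs s u} u"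

definition pg_step :: "'a list \<Rightarrow> ('a \<Rightarrow> 'a \<Rightarrow> bool) \<Rightarrow> ('a set \<Rightarrow> real) \<Rightarrow> real \<Rightarrow> 'a set \<Rightarrow> 'a \<Rightarrow> 'a set" where
  "pg_step vs E f \<beta> S v =
     (let C = nbhd E v \<inter> S in
      if marg f S v \<ge> (1 + \<beta>) * (\<Sum>u\<in>C. nu vs f S u) then (S - C) \<union> {v} else S)"

fun pg_states :: "'a list \<Rightarrow> ('a \<Rightarrow> 'a \<Rightarrow> bool) \<Rightarrow> ('a set \<Rightarrow> real) \<Rightarrow> real \<Rightarrow> 'a set \<Rightarrow> 'a list \<Rightarrow> 'a set list" where
  "pg_states vs E f \<beta> S [] = [S]"
| "pg_states vs E f \<beta> S (w # ws) = S # pg_states vs E f \<beta> (pg_step vs E f \<beta> S w) ws"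

definition pg_output :: "'a list \<Rightarrow> ('a \<Rightarrow> 'a \<Rightarrow> bool) \<Rightarrow> ('a set \<Rightarrow> real) \<Rightarrow> real \<Rightarrow> 'a set" where
  "pg_output vs E f \<beta> = last (pg_states vs E f \<beta> {} vs)"

definition pg_union :: "'a list \<Rightarrow> ('a \<Rightarrow> 'a \<Rightarrow> bool) \<Rightarrow> ('a set \<Rightarrow> real) \<Rightarrow> real \<Rightarrow> 'a set" where
  "pg_union vs E f \<beta> = \<Union> (set (pg_states vs E f \<beta> {} vs))"

end

theory Submission
  imports Defs
begin

lemma pg_states_len: "length (pg_states vs E f \<beta> S ws) = Suc (length ws)"
  by (induction ws arbitrary: S) auto

lemma pg_states_nth: "i \<le> length ws \<Longrightarrow>
   pg_states vs E f \<beta> S ws ! i = foldl (pg_step vs E f \<beta>) S (take i ws)"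
proof (induction ws arbitrary: S i)
  case Nil then show ?case by simp
next
  case (Cons w ws) then show ?case by (cases i) auto
qed

lemma exists_step: "Q j \<Longrightarrow> \<not> Q n \<Longrightarrow> j \<le> (n::nat) \<Longrightarrow> \<exists>m. j \<le> m \<and> m < n \<and> Q m \<and> \<not> Q (Suc m)"
proof (induction n)
  case 0 then show ?case by auto
next
  case (Suc n)
  show ?case
  proof (cases "Q n")
    case True then show ?thesis using Suc by (metis le_SucE lessI)
  next
    case False
    then have "j \<le> n" using Suc by (metis le_SucE)
    then show ?thesis using Suc False by (metis less_Suc_eq)
  qed
qed

lemma sum_if_sub: "finite A \<Longrightarrow> B \<subseteq> A \<Longrightarrow> (\<Sum>u\<in>A. if u \<in> B then g u else 0) = (sum g B :: real)"
  using sum.inter_restrict[of A g B] by (simp add: Int_absorb1)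

locale pg =
  fixes V :: "'a set" and E :: "'a \<Rightarrow> 'a \<Rightarrow> bool" and vs :: "'a list"
    and f :: "'a set \<Rightarrow> real" and k :: nat and \<beta> :: real
  assumes dist: "distinct vs" and Vset: "set vs = V"
    and sg: "simple_graph V E"
    and kio: "k_indep_ordering E k vs"
    and mono: "monotone_set_fun V f"
    and submod: "submodular V f"
    and f0: "f {} = 0"
    and bpos: "\<beta> > 0"
begin

definition pos :: "'a \<Rightarrow> nat" where
  "pos u = (THE i. i < length vs \<and> vs ! i = u)"

lemma pos_nth: "i < length vs \<Longrightarrow> pos (vs ! i) = i"
  unfolding pos_def using dist by (auto intro!: the_equality simp: nth_eq_iff_index_eq)

lemma pos_in: "u \<in> set vs \<Longrightarrow> pos u < length vs \<and> vs ! pos u = u"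
  by (metis in_set_conv_nth pos_nth)

definition P :: "nat \<Rightarrow> 'a set" where
  "P j = {u \<in> set vs. pos u < j}"

lemma P_V: "P j \<subseteq> V" unfolding P_def using Vset by auto

lemma P_Suc: "j < length vs \<Longrightarrow> P (Suc j) = insert (vs ! j) (P j)"
  unfolding P_def using pos_nth pos_in by (auto simp: less_Suc_eq)

lemma P_all: "P (length vs) = V"
  unfolding P_def using pos_in Vset by auto

lemma ord_less_iff: "ord_less vs s u \<longleftrightarrow> s \<in> set vs \<and> u \<in> set vs \<and> pos s < pos u"
  unfolding ord_less_def
  by (metis (no_types, lifting) dual_order.strict_trans nth_mem pos_in pos_nth)

lemma nu_eq: "u \<in> set vs \<Longrightarrow> nu vs f S u = marg f (S \<inter> P (pos u)) u"
  unfolding nu_def P_def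
  by (rule arg_cong[where f="\<lambda>X. marg f X u"]) (auto simp: ord_less_iff)

lemma dimret: "A \<subseteq> B \<Longrightarrow> B \<subseteq> V \<Longrightarrow> v \<in> V \<Longrightarrow> marg f B v \<le> marg f A v"
proof (cases "v \<in> B")
  case True
  assume "A \<subseteq> B" "B \<subseteq> V" "v \<in> V"
  then have sub: "A \<union> {v} \<subseteq> V" by auto
  have "f A \<le> f (A \<union> {v})" using mono sub unfolding monotone_set_fun_def by blast
  then show ?thesis using True unfolding marg_def by (simp add: insert_absorb)
next
  case False
  assume a: "A \<subseteq> B" "B \<subseteq> V" "v \<in> V"
  have av: "A \<union> {v} \<subseteq> V" using a by auto
  have "f ((A \<union> {v}) \<union> B) + f ((A \<union> {v}) \<inter> B) \<le> f (A \<union> {v}) + f B"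
    using submod[unfolded submodular_def, rule_format, OF av a(2)] .
  moreover have "(A \<union> {v}) \<inter> B = A" using a False by auto
  moreover have "(A \<union> {v}) \<union> B = B \<union> {v}" using a by auto
  ultimately show ?thesis unfolding marg_def by simp
qed

lemma marg_nonneg: "A \<subseteq> V \<Longrightarrow> v \<in> V \<Longrightarrow> marg f A v \<ge> 0"
proof -
  assume a: "A \<subseteq> V" "v \<in> V"
  then have sub: "A \<union> {v} \<subseteq> V" by auto
  have "f A \<le> f (A \<union> {v})" using mono sub unfolding monotone_set_fun_def by blast
  then show ?thesis unfolding marg_def by simp
qed

lemma nu_nonneg: "S \<subseteq> V \<Longrightarrow> u \<in> V \<Longrightarrow> nu vs f S u \<ge> 0"
  using nu_eq marg_nonneg Vset P_V by (metis inf.coboundedI1)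

lemma telescope_aux: "S \<subseteq> V \<Longrightarrow> m \<le> length vs \<Longrightarrow>
   f (S \<inter> P m) = (\<Sum>u\<in>S \<inter> P m. marg f (S \<inter> P (pos u)) u)"
proof (induction m)
  case 0 then show ?case by (simp add: P_def f0)
next
  case (Suc m)
  have fin: "finite (S \<inter> P m)" using Vset unfolding P_def by auto
  have m: "m < length vs" using Suc by auto
  show ?case
  proof (cases "vs ! m \<in> S")
    case True
    have notin: "vs ! m \<notin> P m" using pos_nth[OF m] unfolding P_def by auto
    have eq: "S \<inter> P (Suc m) = insert (vs ! m) (S \<inter> P m)" using P_Suc[OF m] True by auto
    have "f (S \<inter> P (Suc m)) = f (S \<inter> P m) + marg f (S \<inter> P m) (vs ! m)"
      unfolding marg_def eq by simp
    also have "\<dots> = (\<Sum>u\<in>S \<inter> P (Suc m). marg f (S \<inter> P (pos u)) u)"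
      unfolding eq using fin notin Suc m by (simp add: pos_nth)
    finally show ?thesis .
  next
    case False
    then have "S \<inter> P (Suc m) = S \<inter> P m" using P_Suc[OF m] by auto
    then show ?thesis using Suc by simp
  qed
qed

lemma telescope: "S \<subseteq> V \<Longrightarrow> f S = (\<Sum>u\<in>S. nu vs f S u)"
proof -
  assume S: "S \<subseteq> V"
  have "S \<inter> P (length vs) = S" using P_all S by auto
  then have "f S = (\<Sum>u\<in>S. marg f (S \<inter> P (pos u)) u)"
    using telescope_aux[OF S, of "length vs"] by simp
  also have "\<dots> = (\<Sum>u\<in>S. nu vs f S u)"
    using S Vset by (intro sum.cong) (auto simp: nu_eq)
  finally show ?thesis .
qed

primrec st :: "nat \<Rightarrow> 'a set" where
  "st 0 = {}"
| "st (Suc j) = pg_step vs E f \<beta> (st j) (vs ! j)"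

definition C :: "nat \<Rightarrow> 'a set" where
  "C j = nbhd E (vs ! j) \<inter> st j"

definition addc :: "nat \<Rightarrow> bool" where
  "addc j \<longleftrightarrow> marg f (st j) (vs ! j) \<ge> (1 + \<beta>) * (\<Sum>u\<in>C j. nu vs f (st j) u)"

lemma st_Suc: "st (Suc j) = (if addc j then (st j - C j) \<union> {vs ! j} else st j)"
  by (simp add: pg_step_def Let_def C_def addc_def)

declare st.simps(2)[simp del]

lemma st_P: "j \<le> length vs \<Longrightarrow> st j \<subseteq> P j"
proof (induction j)
  case 0 then show ?case by simp
next
  case (Suc j)
  then have "st (Suc j) \<subseteq> st j \<union> {vs ! j}" by (auto simp: st_Suc)
  then show ?case using Suc P_Suc[of j] by auto
qed


lemma st_V: "j \<le> length vs \<Longrightarrow> st j \<subseteq> V" using st_P P_V by blast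

lemma st_mono_P: "j \<le> m \<Longrightarrow> m \<le> length vs \<Longrightarrow> st m \<inter> P j \<subseteq> st j"
proof (induction m)
  case 0 then show ?case by simp
next
  case (Suc m)
  show ?case
  proof (cases "j = Suc m")
    case True then show ?thesis by auto
  next
    case False
    then have jm: "j \<le> m" "m < length vs" using Suc by auto
    have "st (Suc m) \<subseteq> st m \<union> {vs ! m}" by (auto simp: st_Suc)
    moreover have "vs ! m \<notin> P j" using pos_nth[OF jm(2)] jm unfolding P_def by auto
    ultimately show ?thesis using Suc jm by auto
  qed
qed

lemma nu_mono: "u \<in> st j \<Longrightarrow> j \<le> m \<Longrightarrow> m \<le> length vs \<Longrightarrow> nu vs f (st j) u \<le> nu vs f (st m) u"
proof -
  assume a: "u \<in> st j" "j \<le> m" "m \<le> length vs"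
  have uP: "u \<in> P j" using a st_P[of j] by auto
  then have u: "u \<in> set vs" "pos u < j" unfolding P_def by auto
  have "P (pos u) \<subseteq> P j" using u unfolding P_def by auto
  then have sub: "st m \<inter> P (pos u) \<subseteq> st j \<inter> P (pos u)" using st_mono_P[OF a(2,3)] by auto
  have "st j \<inter> P (pos u) \<subseteq> V" using P_V by auto
  then show ?thesis using nu_eq[OF u(1)] dimret[OF sub] u Vset by auto
qed

lemma step_gain:
  assumes j: "j < length vs" and ad: "addc j"
  shows "f (st (Suc j)) \<ge> f (st j) - (\<Sum>u\<in>C j. nu vs f (st j) u) + marg f (st j) (vs ! j)"
proof -
  define S where "S = st j"
  define v where "v = vs ! j"
  have SP: "S \<subseteq> P j" using st_P j S_def by auto
  have SV: "S \<subseteq> V" using SP P_V by auto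
  have fin: "finite S" using SV Vset finite_subset by auto
  have vnot: "v \<notin> P j" using pos_nth[OF j] unfolding v_def P_def by auto
  have vV: "v \<in> V" using j Vset v_def by auto
  have CS: "C j \<subseteq> S" unfolding C_def S_def by auto
  define S' where "S' = insert v (S - C j)"
  have S'eq: "st (Suc j) = S'" using ad unfolding st_Suc S'_def S_def v_def by auto
  have S'V: "S' \<subseteq> V" using SV vV S'_def by auto
  have vnot2: "v \<notin> S - C j" using vnot SP by auto
  have "f S = (\<Sum>u\<in>S. nu vs f S u)" using telescope SV by simp
  also have "\<dots> = (\<Sum>u\<in>S - C j. nu vs f S u) + (\<Sum>u\<in>C j. nu vs f S u)"
    using sum.subset_diff[OF CS fin] by simp
  finally have fS: "f S = (\<Sum>u\<in>S - C j. nu vs f S u) + (\<Sum>u\<in>C j. nu vs f S u)" .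
  have "f S' = (\<Sum>u\<in>S'. nu vs f S' u)" using telescope S'V by simp
  also have "\<dots> = nu vs f S' v + (\<Sum>u\<in>S - C j. nu vs f S' u)"
    unfolding S'_def using fin vnot2 by simp
  finally have fS': "f S' = nu vs f S' v + (\<Sum>u\<in>S - C j. nu vs f S' u)" .
  have "S' \<inter> P j = S - C j" using SP vnot unfolding S'_def by auto
  then have "nu vs f S' v = marg f (S - C j) v"
    using nu_eq[of v S'] pos_nth[OF j] j v_def by auto
  also have "\<dots> \<ge> marg f S v" using dimret[of "S - C j" S v] SV vV by auto
  finally have g1: "nu vs f S' v \<ge> marg f S v" .
  have g2: "(\<Sum>u\<in>S - C j. nu vs f S u) \<le> (\<Sum>u\<in>S - C j. nu vs f S' u)"
  proof (rule sum_mono)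
    fix u assume u: "u \<in> S - C j"
    then have uP: "u \<in> set vs" "pos u < j" using SP unfolding P_def by auto
    have "v \<notin> P (pos u)" using vnot uP unfolding P_def by auto
    then have sub: "S' \<inter> P (pos u) \<subseteq> S \<inter> P (pos u)" unfolding S'_def by auto
    have "S \<inter> P (pos u) \<subseteq> V" using SV by auto
    then show "nu vs f S u \<le> nu vs f S' u"
      using nu_eq[OF uP(1)] dimret[OF sub] uP Vset by auto
  qed
  have "f (st (Suc j)) = f S'" using S'eq by simp
  then show ?thesis using fS fS' g1 g2 unfolding S_def v_def by linarith
qed

lemma diff_eq: "j < length vs \<Longrightarrow> st j - st (Suc j) = (if addc j then C j else {})"
proof -
  assume j: "j < length vs"
  have "vs ! j \<notin> st j" using st_P[of j] j pos_nth[OF j] unfolding P_def by auto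
  then show ?thesis unfolding st_Suc C_def by auto
qed

lemma potential: "i \<le> length vs \<Longrightarrow>
   \<beta> * (\<Sum>j<i. \<Sum>u\<in>st j - st (Suc j). nu vs f (st j) u) \<le> f (st i)"
proof (induction i)
  case 0 then show ?case by (simp add: f0)
next
  case (Suc i)
  then have i: "i < length vs" by auto
  have IH: "\<beta> * (\<Sum>j<i. \<Sum>u\<in>st j - st (Suc j). nu vs f (st j) u) \<le> f (st i)"
    using Suc by auto
  show ?case
  proof (cases "addc i")
    case True
    have ad: "marg f (st i) (vs ! i) \<ge> (1 + \<beta>) * (\<Sum>u\<in>C i. nu vs f (st i) u)"
      using True unfolding addc_def by simp
    have "f (st (Suc i)) \<ge> f (st i) + \<beta> * (\<Sum>u\<in>C i. nu vs f (st i) u)"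
      using step_gain[OF i True] ad by (simp add: algebra_simps)
    then show ?thesis using IH diff_eq[OF i] True by (simp add: algebra_simps)
  next
    case False
    then show ?thesis using IH diff_eq[OF i] by (simp add: st_Suc)
  qed
qed

definition val :: "'a \<Rightarrow> real" where
  "val u = (\<Sum>j<length vs. if u \<in> st j - st (Suc j) then nu vs f (st j) u else 0)
          + (if u \<in> st (length vs) then nu vs f (st (length vs)) u else 0)"

lemma term_nonneg: "u \<in> V \<Longrightarrow> j \<le> length vs \<Longrightarrow> nu vs f (st j) u \<ge> 0"
  using nu_nonneg st_V by auto

lemma val_nonneg: "u \<in> V \<Longrightarrow> val u \<ge> 0"
  unfolding val_def using term_nonneg
  by (intro add_nonneg_nonneg sum_nonneg) auto

lemma val_ge: "u \<in> st j \<Longrightarrow> j \<le> length vs \<Longrightarrow> nu vs f (st j) u \<le> val u"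
proof -
  assume a: "u \<in> st j" "j \<le> length vs"
  have uV: "u \<in> V" using a st_V by auto
  have s1: "0 \<le> (\<Sum>j<length vs. if u \<in> st j - st (Suc j) then nu vs f (st j) u else 0)"
    using term_nonneg uV by (intro sum_nonneg) auto
  show ?thesis
  proof (cases "u \<in> st (length vs)")
    case True
    then show ?thesis using nu_mono[OF a(1) a(2)] s1 unfolding val_def by auto
  next
    case False
    obtain m where m: "j \<le> m" "m < length vs" "u \<in> st m" "u \<notin> st (Suc m)"
      using exists_step[of "\<lambda>i. u \<in> st i", OF a(1) False a(2)] by auto
    have "nu vs f (st j) u \<le> nu vs f (st m) u" using nu_mono[OF a(1) m(1)] m by auto
    also have "\<dots> = (if u \<in> st m - st (Suc m) then nu vs f (st m) u else 0)" using m by simp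
    also have "\<dots> \<le> (\<Sum>j<length vs. if u \<in> st j - st (Suc j) then nu vs f (st j) u else 0)"
      by (rule member_le_sum) (use m term_nonneg uV in auto)
    finally show ?thesis using False unfolding val_def by simp
  qed
qed

lemma sum_val: "(\<Sum>u\<in>V. val u) \<le> (1 + 1 / \<beta>) * f (st (length vs))"
proof -
  have finV: "finite V" using Vset by auto
  have D: "st j - st (Suc j) \<subseteq> V" if "j < length vs" for j using st_V[of j] that by auto
  have "(\<Sum>u\<in>V. val u) = (\<Sum>j<length vs. \<Sum>u\<in>V. if u \<in> st j - st (Suc j) then nu vs f (st j) u else 0)
        + (\<Sum>u\<in>V. if u \<in> st (length vs) then nu vs f (st (length vs)) u else 0)"
    unfolding val_def sum.distrib by (simp add: sum.swap[of _ V])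
  also have "(\<Sum>u\<in>V. if u \<in> st (length vs) then nu vs f (st (length vs)) u else 0)
      = (\<Sum>u\<in>st (length vs). nu vs f (st (length vs)) u)"
    using st_V[of "length vs"] finV by (intro sum_if_sub) auto
  also have "\<dots> = f (st (length vs))" using telescope st_V by simp
  also have "(\<Sum>j<length vs. \<Sum>u\<in>V. if u \<in> st j - st (Suc j) then nu vs f (st j) u else 0)
     = (\<Sum>j<length vs. \<Sum>u\<in>st j - st (Suc j). nu vs f (st j) u)"
  proof (rule sum.cong)
    fix j assume "j \<in> {..<length vs}"
    then have "st j - st (Suc j) \<subseteq> V" using D by auto
    then show "(\<Sum>u\<in>V. if u \<in> st j - st (Suc j) then nu vs f (st j) u else 0)
      = (\<Sum>u\<in>st j - st (Suc j). nu vs f (st j) u)"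
      by (rule sum_if_sub[OF finV])
  qed simp
  finally have eq: "(\<Sum>u\<in>V. val u) = (\<Sum>j<length vs. \<Sum>u\<in>st j - st (Suc j). nu vs f (st j) u) + f (st (length vs))" .
  have "\<beta> * (\<Sum>j<length vs. \<Sum>u\<in>st j - st (Suc j). nu vs f (st j) u) \<le> f (st (length vs))"
    using potential by simp
  then have "(\<Sum>j<length vs. \<Sum>u\<in>st j - st (Suc j). nu vs f (st j) u) \<le> f (st (length vs)) / \<beta>"
    using bpos by (simp add: pos_le_divide_eq mult.commute)
  then show ?thesis using eq by (simp add: algebra_simps)
qed


lemma subadd: "A \<subseteq> V \<Longrightarrow> B \<subseteq> V \<Longrightarrow> f (B \<union> A) - f B \<le> (\<Sum>t\<in>A. marg f B t)"
proof -
  assume A: "A \<subseteq> V" and B: "B \<subseteq> V"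
  have "finite A" using A Vset finite_subset by auto
  then show ?thesis using A
  proof (induction A rule: finite_induct)
    case empty then show ?case by simp
  next
    case (insert a A)
    have "f (B \<union> insert a A) - f (B \<union> A) = marg f (B \<union> A) a"
      unfolding marg_def by (simp add: insert_commute)
    also have "\<dots> \<le> marg f B a" using dimret[of B "B \<union> A" a] insert B by auto
    finally show ?case using insert by simp
  qed
qed

lemma in_drop: "i \<le> j \<Longrightarrow> j < length vs \<Longrightarrow> vs ! j \<in> set (drop i vs)"
proof -
  assume a: "i \<le> j" "j < length vs"
  have "drop i vs ! (j - i) = vs ! j" using a by simp
  moreover have "j - i < length (drop i vs)" using a by simp
  ultimately show ?thesis by (metis nth_mem)
qed

lemma sum_if_const: "finite A \<Longrightarrow> (\<Sum>t\<in>A. if Q t then c else 0) = (c::real) * card {t\<in>A. Q t}"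
proof -
  assume fin: "finite A"
  have "(\<Sum>t\<in>A. if Q t then c else 0) = (\<Sum>t\<in>A. if t \<in> {t\<in>A. Q t} then c else 0)"
    by (intro sum.cong) auto
  also have "\<dots> = (\<Sum>t\<in>{t\<in>A. Q t}. c)" by (rule sum_if_sub[OF fin]) auto
  finally show ?thesis by simp
qed

lemma main:
  assumes T: "T \<subseteq> V" "indep_set E T"
  defines "U \<equiv> \<Union> (st ` {..length vs})"
  shows "f (U \<union> T) - f U \<le> real k * (1 + \<beta>) * (1 + 1 / \<beta>) * f (st (length vs))"
proof -
  have UV: "U \<subseteq> V" unfolding U_def using st_V by auto
  have finV: "finite V" using Vset by auto
  have TU: "T - U \<subseteq> V" using T by auto
  have finTU: "finite (T - U)" using TU finV finite_subset by auto
  have "U \<union> T = U \<union> (T - U)" by auto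
  then have h1: "f (U \<union> T) - f U \<le> (\<Sum>t\<in>T - U. marg f U t)" using subadd[OF TU UV] by simp
  have CV: "C j \<subseteq> V" if "j < length vs" for j using st_V[of j] that unfolding C_def by auto
  have h2: "marg f U t \<le> (1 + \<beta>) * (\<Sum>u\<in>C (pos t). val u)" if t: "t \<in> T - U" for t
  proof -
    have tv: "t \<in> set vs" using t T Vset by auto
    note pt = pos_in[OF tv]
    have s1: "st (pos t) \<subseteq> U" unfolding U_def using pt
      by (intro Union_upper imageI) auto
    have s2: "st (Suc (pos t)) \<subseteq> U" unfolding U_def using pt
      by (intro Union_upper imageI) auto
    have "t \<notin> st (Suc (pos t))" using s2 t by auto
    then have na: "\<not> addc (pos t)" using pt unfolding st_Suc by auto
    then have "marg f (st (pos t)) t < (1 + \<beta>) * (\<Sum>u\<in>C (pos t). nu vs f (st (pos t)) u)"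
      using pt unfolding addc_def by auto
    moreover have "marg f U t \<le> marg f (st (pos t)) t" using dimret[OF s1 UV] tv Vset by auto
    moreover have "(\<Sum>u\<in>C (pos t). nu vs f (st (pos t)) u) \<le> (\<Sum>u\<in>C (pos t). val u)"
      using val_ge pt unfolding C_def by (intro sum_mono) auto
    ultimately show ?thesis using bpos
      by (smt (verit, ccfv_SIG) mult_left_mono)
  qed
  define N where "N u = {t \<in> T - U. u \<in> C (pos t)}" for u
  have h3: "(\<Sum>t\<in>T - U. \<Sum>u\<in>C (pos t). val u) = (\<Sum>u\<in>V. val u * card (N u))"
  proof -
    have "(\<Sum>t\<in>T - U. \<Sum>u\<in>C (pos t). val u) = (\<Sum>t\<in>T - U. \<Sum>u\<in>V. if u \<in> C (pos t) then val u else 0)"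
    proof (rule sum.cong)
      fix t assume "t \<in> T - U"
      then have "pos t < length vs" using pos_in T Vset by auto
      then show "(\<Sum>u\<in>C (pos t). val u) = (\<Sum>u\<in>V. if u \<in> C (pos t) then val u else 0)"
        using sum_if_sub[OF finV CV] by simp
    qed simp
    also have "\<dots> = (\<Sum>u\<in>V. \<Sum>t\<in>T - U. if u \<in> C (pos t) then val u else 0)"
      by (rule sum.swap)
    also have "\<dots> = (\<Sum>u\<in>V. val u * card (N u))"
      unfolding N_def using sum_if_const[OF finTU] by simp
    finally show ?thesis .
  qed
  have h4: "card (N u) \<le> k" if u: "u \<in> V" for u
  proof -
    have uv: "u \<in> set vs" using u Vset by auto
    note pu = pos_in[OF uv]
    have "N u \<subseteq> nbhd E (vs ! pos u) \<inter> set (drop (pos u) vs)"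
    proof
      fix t assume t: "t \<in> N u"
      then have tv: "t \<in> set vs" using T Vset unfolding N_def by auto
      note pt = pos_in[OF tv]
      have uc: "u \<in> nbhd E t" "u \<in> st (pos t)" using t pt unfolding N_def C_def by auto
      have "E u t" using uc(1) sg unfolding nbhd_def simple_graph_def by auto
      moreover have "pos u < pos t" using uc(2) st_P[of "pos t"] pt unfolding P_def by auto
      ultimately show "t \<in> nbhd E (vs ! pos u) \<inter> set (drop (pos u) vs)"
        using pu pt in_drop[of "pos u" "pos t"] unfolding nbhd_def by auto
    qed
    moreover have "indep_set E (N u)" using T(2) unfolding indep_set_def N_def by auto
    ultimately show ?thesis using kio pu unfolding k_indep_ordering_def by blast
  qed
  have "(\<Sum>u\<in>V. val u * card (N u)) \<le> (\<Sum>u\<in>V. val u * k)"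
    using h4 val_nonneg by (intro sum_mono mult_left_mono) auto
  also have "\<dots> = k * (\<Sum>u\<in>V. val u)" by (simp add: sum_distrib_left mult.commute)
  also have "\<dots> \<le> k * ((1 + 1 / \<beta>) * f (st (length vs)))"
    using sum_val by (intro mult_left_mono) auto
  finally have h5: "(\<Sum>t\<in>T - U. \<Sum>u\<in>C (pos t). val u) \<le> k * ((1 + 1 / \<beta>) * f (st (length vs)))"
    using h3 by simp
  have "(\<Sum>t\<in>T - U. marg f U t) \<le> (\<Sum>t\<in>T - U. (1 + \<beta>) * (\<Sum>u\<in>C (pos t). val u))"
    using h2 by (intro sum_mono) auto
  also have "\<dots> = (1 + \<beta>) * (\<Sum>t\<in>T - U. \<Sum>u\<in>C (pos t). val u)" by (simp add: sum_distrib_left)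
  also have "\<dots> \<le> (1 + \<beta>) * (k * ((1 + 1 / \<beta>) * f (st (length vs))))"
    using h5 bpos by (intro mult_left_mono) auto
  finally have h6: "(\<Sum>t\<in>T - U. marg f U t) \<le> (1 + \<beta>) * (k * ((1 + 1 / \<beta>) * f (st (length vs))))" .
  have "(1 + \<beta>) * (k * ((1 + 1 / \<beta>) * f (st (length vs))))
     = real k * (1 + \<beta>) * (1 + 1 / \<beta>) * f (st (length vs))" by (simp only: ac_simps)
  then show ?thesis using h1 h6 by linarith
qed

lemma st_foldl: "j \<le> length vs \<Longrightarrow> foldl (pg_step vs E f \<beta>) {} (take j vs) = st j"
proof (induction j)
  case 0 then show ?case by simp
next
  case (Suc j)
  then show ?case by (simp add: take_Suc_conv_app_nth st.simps(2))
qed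

lemma output_eq: "pg_output vs E f \<beta> = st (length vs)"
proof -
  have "pg_states vs E f \<beta> {} vs \<noteq> []" using pg_states_len[of vs E f \<beta> "{}" vs] by auto
  then show ?thesis unfolding pg_output_def
    using st_foldl[of "length vs"] by (simp add: last_conv_nth pg_states_len pg_states_nth)
qed

lemma union_eq: "pg_union vs E f \<beta> = \<Union> (st ` {..length vs})"
proof -
  have "set (pg_states vs E f \<beta> {} vs) = st ` {..length vs}"
    unfolding set_conv_nth pg_states_len
    by (auto simp: pg_states_nth st_foldl less_Suc_eq_le) (metis order_refl pg_states_nth st_foldl)
  then show ?thesis unfolding pg_union_def by simp
qed

lemma final:
  assumes "T \<subseteq> V" "indep_set E T"
  shows "f (pg_union vs E f \<beta> \<union> T) - f (pg_union vs E f \<beta>)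
           \<le> real k * (1 + \<beta>) * (1 + 1 / \<beta>) * f (pg_output vs E f \<beta>)"
  using main[OF assms] unfolding union_eq output_eq .

end

theorem lemma16:
  fixes V :: "'a set" and E :: "'a \<Rightarrow> 'a \<Rightarrow> bool" and vs :: "'a list"
    and f :: "'a set \<Rightarrow> real" and k :: nat and \<beta> :: real and T :: "'a set"
  assumes "k \<ge> 1"
    and "distinct vs" and "set vs = V"
    and "simple_graph V E"
    and "k_indep_ordering E k vs"
    and "\<forall>A \<subseteq> V. f A \<ge> 0"
    and "monotone_set_fun V f"
    and "submodular V f"
    and "f {} = 0"
    and "\<beta> > 0"
    and "T \<subseteq> V" and "indep_set E T"
  shows "f (pg_union vs E f \<beta> \<union> T) - f (pg_union vs E f \<beta>)
           \<le> real k * (1 + \<beta>) * (1 + 1 / \<beta>) * f (pg_output vs E f \<beta>)"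
proof -
  have "pg V E vs f k \<beta>" unfolding pg_def using assms by auto
  then show ?thesis using pg.final assms(11,12) by blast
qed

end
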